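(* Let $K\ge 2$ and $L\ge 2$ be integers and set $$s^*=\frac{L\,(K-1)^{L}}{K^{L+1}-(K-1)^{L-1}\big((K-1)K+L\big)}.$$ Consider the $K$-proposer game in which proposer $i$ chooses an offer $s_i\in[0,1]$, and, for every offer profile $(s_1,\dots,s_K)$ that is not identically zero, the $L$ responders all play the unique evolutionarily stable strategy $(p_1,\dots,p_K)$ of the responder game induced by these offers, so that proposer $i$'s expected payoff is $\Pi_{P,i}=(1-s_i)\big(1-(1-p_i)^L\big)$. Then the profile in which every proposer offers $s_i=s^*$ is a subgame-perfect Nash equilibrium, and apart from the profile in which all offers are zero, it is the only subgame-perfect Nash equilibrium. In this equilibrium each responder selects each proposer with probability $1/K$.
   Context: Multi-Proposer-Multi-Responder Ultimatum Game with $K$ proposers and $L$ responders: each proposer $i$ simultaneously offers a share $s_i\in[0,1]$ of a reward of size one to the responders; each responder, knowing all offers and independently of the others, selects one proposer according to a mixed strategy $(p_1,\dots,p_K)$; a proposer selected by at least one responder receives $1-s_i$, otherwise $0$; among the $N_i$ responders who selected proposer $i$, exactly one chosen uniformly at random receives $s_i$, the others receive $0$. Given offers not all zero, the induced symmetric $L$-player responder game has a unique evolutionarily stable strategy (responders are drawn from an infinite population; $p$ is evolutionarily stable if for every $q\ne p$ and all sufficiently small $\varepsilon>0$, a focal player using $p$ earns strictly more than one using $q$ when the other $L-1$ players independently play $(1-\varepsilon)p+\varepsilon q$). Subgame-perfect Nash equilibrium here means an offer profile from which no proposer can strictly increase its expected payoff by unilaterally changing its offer, responders' behaviour in each subgame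 being this evolutionarily stable strategy. *)

theory Defs
  imports Complex_Main
begin

text \<open>Proposers are indexed by 0,...,K-1. Offer profiles and mixed strategies are
  functions nat => real that vanish outside {..<K}.\<close>

definition offers :: "nat \<Rightarrow> (nat \<Rightarrow> real) set" where
  "offers K = {s. (\<forall>i<K. 0 \<le> s i \<and> s i \<le> 1) \<and> (\<forall>i\<ge>K. s i = 0)}"

definition simplex :: "nat \<Rightarrow> (nat \<Rightarrow> real) set" where
  "simplex K = {p. (\<forall>i. 0 \<le> p i) \<and> (\<forall>i\<ge>K. p i = 0) \<and> (\<Sum>i<K. p i) = 1}"

text \<open>Expected payoff of a focal responder who selects proposer j, when the other
  L-1 responders independently select proposer j with probability x: the reward s_j
  is given to one of the 1+M selecting responders uniformly, M ~ Binomial(L-1,x).\<close>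

definition win_prob :: "nat \<Rightarrow> real \<Rightarrow> real" where
  "win_prob L x = (\<Sum>m\<le>L-1. real ((L-1) choose m) * x ^ m * (1 - x) ^ (L - 1 - m) / real (m + 1))"

definition resp_payoff :: "nat \<Rightarrow> nat \<Rightarrow> (nat \<Rightarrow> real) \<Rightarrow> (nat \<Rightarrow> real) \<Rightarrow> (nat \<Rightarrow> real) \<Rightarrow> real" where
  "resp_payoff K L s p q = (\<Sum>j<K. p j * s j * win_prob L (q j))"

definition ESS :: "nat \<Rightarrow> nat \<Rightarrow> (nat \<Rightarrow> real) \<Rightarrow> (nat \<Rightarrow> real) \<Rightarrow> bool" where
  "ESS K L s p \<longleftrightarrow> p \<in> simplex K \<and>
     (\<forall>q \<in> simplex K. q \<noteq> p \<longrightarrow>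
        (\<exists>e0>0. \<forall>e. 0 < e \<and> e < e0 \<longrightarrow>
           resp_payoff K L s q (\<lambda>i. (1 - e) * p i + e * q i)
             < resp_payoff K L s p (\<lambda>i. (1 - e) * p i + e * q i)))"

definition resp_strategy :: "nat \<Rightarrow> nat \<Rightarrow> (nat \<Rightarrow> real) \<Rightarrow> (nat \<Rightarrow> real)" where
  "resp_strategy K L s = (THE p. ESS K L s p)"

definition prop_payoff :: "nat \<Rightarrow> nat \<Rightarrow> (nat \<Rightarrow> real) \<Rightarrow> nat \<Rightarrow> real" where
  "prop_payoff K L s i = (1 - s i) * (1 - (1 - resp_strategy K L s i) ^ L)"

definition SPNE :: "nat \<Rightarrow> nat \<Rightarrow> (nat \<Rightarrow> real) \<Rightarrow> bool" where
  "SPNE K L s \<longleftrightarrow> s \<in> offers K \<and>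
     (\<forall>i<K. \<forall>x. 0 \<le> x \<and> x \<le> 1 \<longrightarrow> prop_payoff K L (s(i := x)) i \<le> prop_payoff K L s i)"

definition sstar :: "nat \<Rightarrow> nat \<Rightarrow> real" where
  "sstar K L = real L * (real K - 1) ^ L /
     (real K ^ (L + 1) - (real K - 1) ^ (L - 1) * ((real K - 1) * real K + real L))"

end

theory Submission
  imports Defs "HOL-Analysis.Derivative"
begin


definition Wf :: "nat \<Rightarrow> real \<Rightarrow> real" where
  "Wf L x = (\<Sum>k<L. (1-x)^k) / real L"

lemma win_prob_eq:
  assumes "L \<ge> 1"
  shows "win_prob L x = Wf L x"
proof -
  obtain n where L: "L = Suc n" using assms by (cases L) auto
  show ?thesis
  proof (cases "x = 0")
    case True
    have "win_prob L 0 = (\<Sum>m\<le>n. if m = 0 then 1 else 0)"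
      unfolding win_prob_def L by (intro sum.cong) auto
    also have "\<dots> = 1" by simp
    finally have a: "win_prob L 0 = 1" .
    have "Wf L 0 = 1" unfolding Wf_def L by simp
    with a True show ?thesis by simp
  next
    case False
    have aux: "x * real (Suc n) * (real (n choose m) * x ^ m * (1 - x) ^ (n - m) / real (m + 1))
        = real (Suc n choose Suc m) * x ^ Suc m * (1 - x) ^ (Suc n - Suc m)" for m
    proof -
      have c: "real (Suc n) * real (n choose m) = real (Suc n choose Suc m) * real (Suc m)"
        using Suc_times_binomial_eq[of n m] by (metis of_nat_mult)
      have "x * real (Suc n) * (real (n choose m) * x ^ m * (1 - x) ^ (n - m) / real (m + 1))
          = (real (Suc n) * real (n choose m)) * x ^ Suc m * (1 - x) ^ (n - m) / real (Suc m)"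
        by (simp only: power_Suc Suc_eq_plus1[symmetric]) (simp add: algebra_simps)
      also have "\<dots> = real (Suc n choose Suc m) * x ^ Suc m * (1 - x) ^ (n - m)"
        unfolding c by simp
      finally show ?thesis by simp
    qed
    have "x * real L * win_prob L x
        = (\<Sum>m\<le>n. real (Suc n choose Suc m) * x ^ Suc m * (1 - x) ^ (Suc n - Suc m))"
      unfolding win_prob_def L sum_distrib_left using aux by simp
    also have "\<dots> = (x + (1 - x)) ^ Suc n - (1 - x) ^ Suc n"
      unfolding binomial_ring[of x "1-x" "Suc n"] sum.atMost_Suc_shift by simp
    also have "\<dots> = x * (real L * Wf L x)"
      unfolding Wf_def L using one_diff_power_eq[of "1-x" "Suc n"] by simp
    finally show ?thesis using False L by simp
  qed
qed

lemma G_eq: "real L * x * Wf L x = 1 - (1-x)^L"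
proof (cases "L = 0")
  case True then show ?thesis by (simp add: Wf_def)
next
  case False
  then show ?thesis unfolding Wf_def using one_diff_power_eq[of "1-x" L] by simp
qed

lemma Wf_0: "L \<ge> 1 \<Longrightarrow> Wf L 0 = 1"
  unfolding Wf_def by simp

lemma Wf_ge: assumes "L \<ge> 1" "x \<le> 1" shows "Wf L x \<ge> 1 / real L"
proof -
  have "(\<Sum>k<L. (1-x)^k) \<ge> (\<Sum>k\<in>{0}. (1-x)^k)"
    by (rule sum_mono2) (use assms in auto)
  then show ?thesis unfolding Wf_def using assms by (simp add: divide_right_mono)
qed

lemma Wf_pos: assumes "L \<ge> 1" "x \<le> 1" shows "Wf L x > 0"
  using Wf_ge[OF assms] assms by (smt (verit) divide_pos_pos of_nat_0_less_iff less_le_trans le_less_trans zero_less_one le_numeral_extra(2) one_le_numeral of_nat_le_0_iff)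

lemma Wf_strict_anti:
  assumes "L \<ge> 2" "0 \<le> x" "x < y" "y \<le> 1"
  shows "Wf L y < Wf L x"
proof -
  have "(\<Sum>k<L. (1-y)^k) < (\<Sum>k<L. (1-x)^k)"
  proof (rule sum_strict_mono_ex1)
    show "\<forall>k\<in>{..<L}. (1 - y) ^ k \<le> (1 - x) ^ k"
      using assms by (auto intro!: power_mono)
    show "\<exists>k\<in>{..<L}. (1 - y) ^ k < (1 - x) ^ k"
      using assms by (intro bexI[of _ 1]) auto
  qed auto
  then show ?thesis unfolding Wf_def using assms by (simp add: divide_strict_right_mono)
qed

lemma Wf_anti:
  assumes "L \<ge> 2" "0 \<le> x" "x \<le> y" "y \<le> 1"
  shows "Wf L y \<le> Wf L x"
  using Wf_strict_anti[OF assms(1,2) _ assms(4)] assms(3) by (cases "x = y") auto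

lemma Wf_lt1: assumes "L \<ge> 2" "0 < x" "x \<le> 1" shows "Wf L x < 1"
  using Wf_strict_anti[of L 0 x] Wf_0[of L] assms by auto

lemma Wf_le1: assumes "L \<ge> 2" "0 \<le> x" "x \<le> 1" shows "Wf L x \<le> 1"
  using Wf_anti[of L 0 x] Wf_0[of L] assms by auto

lemma Wf_cont: "isCont (Wf L) x"
  unfolding Wf_def divide_inverse by (intro continuous_intros)

lemma Wf_1: "L \<ge> 1 \<Longrightarrow> Wf L 1 = 1 / real L"
proof -
  assume L: "L \<ge> 1"
  have "(\<Sum>k<L. (0::real)^k) = (\<Sum>k<L. if k = 0 then 1 else 0)"
    by (intro sum.cong) auto
  also have "\<dots> = 1" using L by simp
  finally show ?thesis unfolding Wf_def by simp
qed

lemma resp_payoff_Wf: "L \<ge> 1 \<Longrightarrow> resp_payoff K L s p q = (\<Sum>j<K. p j * s j * Wf L (q j))"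
  unfolding resp_payoff_def by (simp add: win_prob_eq)

definition NE :: "nat \<Rightarrow> nat \<Rightarrow> (nat \<Rightarrow> real) \<Rightarrow> (nat \<Rightarrow> real) \<Rightarrow> real \<Rightarrow> bool" where
  "NE K L s p c \<longleftrightarrow> p \<in> simplex K \<and> (\<forall>k<K. s k * Wf L (p k) \<le> c) \<and>
     (\<forall>k<K. p k > 0 \<longrightarrow> s k * Wf L (p k) = c)"

lemma simplex_le1: "p \<in> simplex K \<Longrightarrow> p k \<le> 1"
proof -
  assume p: "p \<in> simplex K"
  show ?thesis
  proof (cases "k < K")
    case True
    have "(\<Sum>i\<in>{k}. p i) \<le> (\<Sum>i<K. p i)"
      by (rule sum_mono2) (use p True in \<open>auto simp: simplex_def\<close>)
    then show ?thesis using p by (simp add: simplex_def)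
  next
    case False then show ?thesis using p by (simp add: simplex_def)
  qed
qed

lemma sum_delta_mult: "k < (K::nat) \<Longrightarrow> (\<Sum>j<K. (if j = k then 1 else 0) * f j) = (f k :: real)"
proof -
  assume k: "k < K"
  have "(\<Sum>j<K. (if j = k then 1 else 0) * f j) = (\<Sum>j<K. if j = k then f j else 0)"
    by (intro sum.cong) auto
  also have "\<dots> = f k" using k by (subst sum.delta) auto
  finally show ?thesis .
qed

lemma ESS_NE:
  assumes L: "L \<ge> 2" and E: "ESS K L s p"
  shows "NE K L s p (resp_payoff K L s p p)"
proof -
  have p: "p \<in> simplex K" using E by (simp add: ESS_def)
  have L1: "L \<ge> 1" using L by simp
  define c where "c = resp_payoff K L s p p"
  have c_eq: "c = (\<Sum>j<K. p j * (s j * Wf L (p j)))"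
    unfolding c_def using L by (simp add: resp_payoff_Wf mult.assoc)
  have le: "s k * Wf L (p k) \<le> c" if k: "k < K" for k
  proof -
    define q where "q = (\<lambda>i. if i = k then 1 else (0::real))"
    have q: "q \<in> simplex K" using k unfolding simplex_def q_def by auto
    have rq: "resp_payoff K L s q r = s k * Wf L (r k)" for r
    proof -
      have "resp_payoff K L s q r = (\<Sum>j<K. if j = k then s k * Wf L (r k) else 0)"
        unfolding resp_payoff_Wf[OF L1] by (intro sum.cong) (auto simp: q_def)
      also have "\<dots> = s k * Wf L (r k)" using k by simp
      finally show ?thesis .
    qed
    show ?thesis
    proof (cases "q = p")
      case True
      have "c = (\<Sum>j<K. q j * (s j * Wf L (q j)))" using c_eq True by simp
      also have "\<dots> = s k * Wf L (p k)" using k True[symmetric] unfolding q_def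
        by (subst sum_delta_mult) auto
      finally show ?thesis by simp
    next
      case False
      from E q False obtain e0 where e0: "e0 > 0" and
        H: "\<And>e. 0 < e \<Longrightarrow> e < e0 \<Longrightarrow> resp_payoff K L s q (\<lambda>i. (1 - e) * p i + e * q i)
             < resp_payoff K L s p (\<lambda>i. (1 - e) * p i + e * q i)"
        unfolding ESS_def by blast
      define D where "D = (\<lambda>e. (\<Sum>j<K. p j * s j * Wf L ((1 - e) * p j + e * q j)) - s k * Wf L ((1 - e) * p k + e * q k))"
      have HD: "0 < e \<Longrightarrow> e < e0 \<Longrightarrow> 0 \<le> D e" for e
        using H[of e] L unfolding D_def rq by (simp add: resp_payoff_Wf)
      have "isCont D 0" unfolding D_def Wf_def divide_inverse by (intro continuous_intros)
      then have lim: "(D \<longlongrightarrow> D 0) (at_right 0)"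
        by (simp add: isCont_def filterlim_at_split)
      have ev: "eventually (\<lambda>e. 0 \<le> D e) (at_right 0)"
        using eventually_at_right_real[OF e0] by eventually_elim (use HD in auto)
      have "0 \<le> D 0" by (rule tendsto_lowerbound[OF lim ev]) simp
      then show ?thesis unfolding D_def c_eq by (simp add: mult.assoc)
    qed
  qed
  have eq: "s k * Wf L (p k) = c" if k: "k < K" and pk: "p k > 0" for k
  proof -
    have "(\<Sum>j<K. p j * (c - s j * Wf L (p j))) = c * (\<Sum>j<K. p j) - (\<Sum>j<K. p j * (s j * Wf L (p j)))"
      by (simp add: algebra_simps sum_subtractf sum_distrib_left sum_distrib_right)
    also have "\<dots> = c * (\<Sum>j<K. p j) - c" unfolding c_eq ..
    also have "\<dots> = 0" using p by (simp add: simplex_def)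
    finally have z: "(\<Sum>j<K. p j * (c - s j * Wf L (p j))) = 0" .
    have nn: "\<forall>j\<in>{..<K}. 0 \<le> p j * (c - s j * Wf L (p j))"
      using le p by (auto simp: simplex_def)
    have "p k * (c - s k * Wf L (p k)) = 0"
      using z nn k by (subst (asm) sum_nonneg_eq_0_iff) auto
    then show ?thesis using pk by simp
  qed
  show ?thesis unfolding NE_def c_def[symmetric] using p le eq by auto
qed

lemma simplex_nonneg: "p \<in> simplex K \<Longrightarrow> 0 \<le> p k"
  by (simp add: simplex_def)

lemma offers_nz: assumes "s \<in> offers K" "s \<noteq> (\<lambda>_. 0)" obtains i where "i < K" "s i > 0"
proof -
  from assms(2) obtain i where "s i \<noteq> 0" by auto
  moreover have "i < K"
  proof (rule ccontr)
    assume "\<not> i < K"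
    then have "s i = 0" using assms(1) by (simp add: offers_def)
    then show False using calculation by simp
  qed
  moreover have "s i \<ge> 0" using assms(1) calculation by (auto simp: offers_def)
  ultimately show ?thesis using that by force
qed

lemma NE_c_pos:
  assumes L: "L \<ge> 2" and s: "s \<in> offers K" "s \<noteq> (\<lambda>_. 0)" and N: "NE K L s p c"
  shows "c > 0"
proof -
  obtain i where i: "i < K" "s i > 0" using offers_nz[OF s] .
  have p: "p \<in> simplex K" using N by (simp add: NE_def)
  have "Wf L (p i) > 0" using Wf_pos[of L "p i"] L simplex_le1[OF p] by simp
  then have "s i * Wf L (p i) > 0" using i by simp
  moreover have "s i * Wf L (p i) \<le> c" using N i by (simp add: NE_def)
  ultimately show ?thesis by simp
qed

lemma NE_le:
  assumes L: "L \<ge> 2" and s: "s \<in> offers K" and N1: "NE K L s p c" and N2: "NE K L s q d"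
    and cd: "c \<le> d" and c: "c > 0" and j: "j < K"
  shows "q j \<le> p j"
proof (rule ccontr)
  assume "\<not> q j \<le> p j"
  then have lt: "p j < q j" by simp
  have p: "p \<in> simplex K" and q: "q \<in> simplex K" using N1 N2 by (auto simp: NE_def)
  have qj: "q j > 0" using lt simplex_nonneg[OF p, of j] by simp
  have e: "s j * Wf L (q j) = d" using N2 j qj by (simp add: NE_def)
  have le: "s j * Wf L (p j) \<le> c" using N1 j by (simp add: NE_def)
  have sj: "s j \<ge> 0" using s j by (simp add: offers_def)
  have "s j \<noteq> 0" using e cd c by auto
  with sj have sj': "s j > 0" by simp
  have "Wf L (q j) < Wf L (p j)"
    using Wf_strict_anti[OF L simplex_nonneg[OF p] lt simplex_le1[OF q]] .
  then have "s j * Wf L (q j) < s j * Wf L (p j)" using sj' by simp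
  then show False using e le cd by simp
qed

lemma sum_le_eq:
  fixes p q :: "nat \<Rightarrow> real"
  assumes "\<forall>j<K. q j \<le> p j" "(\<Sum>j<K. q j) = (\<Sum>j<K. p j)" "j < K"
  shows "q j = p j"
proof -
  have "(\<Sum>j<K. p j - q j) = 0" using assms(2) by (simp add: sum_subtractf)
  moreover have "\<forall>j\<in>{..<K}. 0 \<le> p j - q j" using assms(1) by auto
  ultimately have "\<forall>j\<in>{..<K}. p j - q j = 0" by (subst (asm) sum_nonneg_eq_0_iff) auto
  then show ?thesis using assms(3) by auto
qed

lemma NE_unique:
  assumes L: "L \<ge> 2" and s: "s \<in> offers K" "s \<noteq> (\<lambda>_. 0)" and N1: "NE K L s p c" and N2: "NE K L s q d"
  shows "p = q"
proof -
  have p: "p \<in> simplex K" and q: "q \<in> simplex K" using N1 N2 by (auto simp: NE_def)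
  have c: "c > 0" and d: "d > 0" using NE_c_pos[OF L s] N1 N2 by auto
  have "\<forall>j<K. q j = p j"
  proof (cases "c \<le> d")
    case True
    then have "\<forall>j<K. q j \<le> p j" using NE_le[OF L s(1) N1 N2 _ c] by auto
    then show ?thesis using sum_le_eq[of K q p] p q by (auto simp: simplex_def)
  next
    case False
    then have "\<forall>j<K. p j \<le> q j" using NE_le[OF L s(1) N2 N1 _ d] by auto
    then show ?thesis using sum_le_eq[of K p q] p q by (auto simp: simplex_def)
  qed
  moreover have "\<forall>j\<ge>K. q j = p j" using p q by (auto simp: simplex_def)
  ultimately show ?thesis by (intro ext) (metis not_less)
qed

lemma resp_NE:
  assumes H: "\<forall>s \<in> offers K. s \<noteq> (\<lambda>_. 0) \<longrightarrow> (\<exists>!p. ESS K L s p)"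
    and L: "L \<ge> 2" and s: "s \<in> offers K" "s \<noteq> (\<lambda>_. 0)"
  shows "NE K L s (resp_strategy K L s) (resp_payoff K L s (resp_strategy K L s) (resp_strategy K L s))"
proof -
  have "\<exists>!p. ESS K L s p" using H s by auto
  then have "ESS K L s (resp_strategy K L s)" unfolding resp_strategy_def by (rule theI')
  then show ?thesis by (rule ESS_NE[OF L])
qed

lemma resp_eq:
  assumes H: "\<forall>s \<in> offers K. s \<noteq> (\<lambda>_. 0) \<longrightarrow> (\<exists>!p. ESS K L s p)"
    and L: "L \<ge> 2" and s: "s \<in> offers K" "s \<noteq> (\<lambda>_. 0)" and N: "NE K L s q c"
  shows "resp_strategy K L s = q"
  using NE_unique[OF L s resp_NE[OF H L s] N] .



definition Dd :: "nat \<Rightarrow> real \<Rightarrow> real" where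
  "Dd L x = (\<Sum>k<L. real k * (1-x)^(k-1)) / real L"

definition Ed :: "nat \<Rightarrow> real \<Rightarrow> real" where
  "Ed L x = (\<Sum>k<L. real k * real (k-1) * (1-x)^(k-2)) / real L"

lemma DERIV_pow1m: "DERIV (\<lambda>x. (1-x)^k) x :> - (real k * (1-x)^(k-1))"
  by (rule derivative_eq_intros refl | simp)+

lemma DERIV_Wf: "DERIV (Wf L) x :> - Dd L x"
proof -
  have "DERIV (\<lambda>x. (\<Sum>k<L. (1-x)^k) * inverse (real L)) x :> (\<Sum>k<L. - (real k * (1-x)^(k-1))) * inverse (real L)"
    by (intro DERIV_cmult_right DERIV_sum DERIV_pow1m)
  moreover have "Wf L = (\<lambda>x. (\<Sum>k<L. (1-x)^k) * inverse (real L))"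
    by (simp add: fun_eq_iff Wf_def divide_inverse)
  moreover have "- Dd L x = (\<Sum>k<L. - (real k * (1-x)^(k-1))) * inverse (real L)"
    by (simp add: Dd_def sum_negf divide_inverse)
  ultimately show ?thesis by simp
qed

lemma DERIV_Dd: "DERIV (Dd L) x :> - Ed L x"
proof -
  have d: "DERIV (\<lambda>x. real k * (1-x)^(k-1)) x :> - (real k * real (k-1) * (1-x)^(k-2))" for k
  proof -
    have "DERIV (\<lambda>x. real k * (1-x)^(k-1)) x :> real k * - (real (k-1) * (1-x)^(k-1-1))"
      by (intro DERIV_cmult DERIV_pow1m)
    moreover have "k - 1 - 1 = k - 2" by simp
    ultimately show ?thesis by (simp add: mult.assoc)
  qed
  have "DERIV (\<lambda>x. (\<Sum>k<L. real k * (1-x)^(k-1)) * inverse (real L)) x :> (\<Sum>k<L. - (real k * real (k-1) * (1-x)^(k-2))) * inverse (real L)"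
    by (intro DERIV_cmult_right DERIV_sum d)
  moreover have "Dd L = (\<lambda>x. (\<Sum>k<L. real k * (1-x)^(k-1)) * inverse (real L))"
    by (simp add: fun_eq_iff Dd_def divide_inverse)
  moreover have "- Ed L x = (\<Sum>k<L. - (real k * real (k-1) * (1-x)^(k-2))) * inverse (real L)"
    by (simp add: Ed_def sum_negf divide_inverse)
  ultimately show ?thesis by simp
qed

lemma Dd_nonneg: "x \<le> 1 \<Longrightarrow> 0 \<le> Dd L x"
  unfolding Dd_def by (intro divide_nonneg_nonneg sum_nonneg) auto

lemma Ed_nonneg: "x \<le> 1 \<Longrightarrow> 0 \<le> Ed L x"
  unfolding Ed_def by (intro divide_nonneg_nonneg sum_nonneg) auto

lemma Dd_pos: "L \<ge> 2 \<Longrightarrow> x < 1 \<Longrightarrow> 0 < Dd L x"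
proof -
  assume L: "L \<ge> 2" and x: "x < 1"
  have "(\<Sum>k\<in>{1}. real k * (1-x)^(k-1)) \<le> (\<Sum>k<L. real k * (1-x)^(k-1))"
    by (rule sum_mono2) (use L x in auto)
  then have "1 \<le> (\<Sum>k<L. real k * (1-x)^(k-1))" by simp
  then show ?thesis unfolding Dd_def using L by simp
qed

lemma bern_aux: "(m::real) \<ge> 0 \<Longrightarrow> (m+1)^(Suc n) \<ge> m^(Suc n) + real (Suc n) * m^n"
proof (induction n)
  case 0 then show ?case by simp
next
  case (Suc n)
  have "(m+1)^(Suc (Suc n)) = (m+1) * (m+1)^(Suc n)" by simp
  also have "\<dots> \<ge> (m+1) * (m^(Suc n) + real (Suc n) * m^n)"
    using Suc by (intro mult_left_mono) auto
  finally have "(m+1)^(Suc (Suc n)) \<ge> (m+1) * (m^(Suc n) + real (Suc n) * m^n)" .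
  moreover have "(m+1) * (m^(Suc n) + real (Suc n) * m^n) \<ge> m^(Suc (Suc n)) + real (Suc (Suc n)) * m^(Suc n)"
    using Suc.prems by (simp add: algebra_simps)
  ultimately show ?case by linarith
qed

lemma sstar_alt:
  assumes "K \<ge> 2" "L \<ge> 2"
  obtains m n where "m \<ge> 1" "n \<ge> 1" "real K = m + 1" "L = Suc n"
    "sstar K L = real (Suc n) * m^(Suc n) / ((m+1)^(n+2) - m^n * (m*(m+1) + real (Suc n)))"
proof -
  obtain n where n: "L = Suc n" using assms by (cases L) auto
  define m where "m = real K - 1"
  have "m \<ge> 1" using assms unfolding m_def by simp
  moreover have "n \<ge> 1" using assms n by simp
  moreover have "real K = m + 1" unfolding m_def by simp
  moreover have "sstar K L = real (Suc n) * m^(Suc n) / ((m+1)^(n+2) - m^n * (m*(m+1) + real (Suc n)))"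
    unfolding sstar_def n m_def by simp
  ultimately show ?thesis using that n by blast
qed

lemma sstar_bounds:
  assumes "K \<ge> 2" "L \<ge> 2"
  shows "0 < sstar K L" "sstar K L < 1"
proof -
  obtain m n where mn: "m \<ge> 1" "n \<ge> 1" "real K = m + 1" "L = Suc n"
    and s: "sstar K L = real (Suc n) * m^(Suc n) / ((m+1)^(n+2) - m^n * (m*(m+1) + real (Suc n)))"
    using sstar_alt[OF assms] by blast
  obtain n' where n': "n = Suc n'" using mn by (cases n) auto
  have b: "(m+1)^(Suc n') \<ge> m^(Suc n') + real (Suc n') * m^n'" using bern_aux[of m n'] mn by simp
  have mp: "m^n' > 0" using mn by simp
  have "(m+1)^(n+1) = (m+1) * (m+1)^(Suc n')" using n' by simp
  also have "\<dots> \<ge> (m+1) * (m^(Suc n') + real (Suc n') * m^n')"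
    using b mn by (intro mult_left_mono) auto
  finally have c1: "(m+1)^(n+1) \<ge> (m+1) * (m^(Suc n') + real (Suc n') * m^n')" .
  have e2: "(m+1) * (m^(Suc n') + real (Suc n') * m^n') - m^n * (m + 1 + real n) = real (Suc n') * m^n'"
    unfolding n' by (simp add: algebra_simps)
  have "real (Suc n') * m^n' > 0" using mp by simp
  then have c2: "(m+1) * (m^(Suc n') + real (Suc n') * m^n') > m^n * (m + 1 + real n)"
    using e2 by linarith
  have key: "(m+1)^(n+1) > m^n * (m + 1 + real n)" using c1 c2 by linarith
  define D where "D = (m+1)^(n+2) - m^n * (m*(m+1) + real (Suc n))"
  have DN: "D - real (Suc n) * m^(Suc n) = (m+1) * ((m+1)^(n+1) - m^n * (m + 1 + real n))"
    unfolding D_def by (simp add: algebra_simps)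
  have "D - real (Suc n) * m^(Suc n) > 0" unfolding DN using key mn by simp
  moreover have "real (Suc n) * m^(Suc n) > 0" using mn by simp
  ultimately have "D > 0" "real (Suc n) * m^(Suc n) < D" by linarith+
  then show "0 < sstar K L" "sstar K L < 1" unfolding s D_def[symmetric] using mn by simp_all
qed

lemma dsum_closed:
  fixes r :: real
  shows "(1-r)^2 * (\<Sum>k<Suc n. real k * r^(k-1)) = 1 - real (Suc n) * r^n + real n * r^(Suc n)"
proof (induction n)
  case 0 then show ?case by simp
next
  case (Suc n)
  have "(1-r)^2 * (\<Sum>k<Suc (Suc n). real k * r^(k-1)) = (1-r)^2 * (\<Sum>k<Suc n. real k * r^(k-1)) + (1-r)^2 * (real (Suc n) * r^n)"
    by (simp add: algebra_simps)
  also have "\<dots> = 1 - real (Suc n) * r^n + real n * r^(Suc n) + (1-r)^2 * (real (Suc n) * r^n)"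
    using Suc by simp
  also have "\<dots> = 1 - real (Suc (Suc n)) * r^(Suc n) + real (Suc n) * r^(Suc (Suc n))"
    by (simp add: algebra_simps power2_eq_square)
  finally show ?case .
qed

lemma key_alg:
  fixes m n X v :: real
  assumes m: "m > 0" and n: "n \<ge> 0" and d: "(m+1)^2 - X * (m*(m+1) + (n+1)) \<noteq> 0"
    and hv: "v * (m+1) = m"
  shows "(n+1) * m * X / ((m+1)^2 - X * (m*(m+1) + (n+1))) *
    ( ((m+1) * (1 - v * X)) / (n+1) + (1/(m+1)) * ((m+1)^2 * (1 - (n+1) * X + n * (v * X)) / (n+1)) / m ) = X"
proof -
  have m1: "m + 1 \<noteq> 0" using m by simp
  have n1: "n + 1 \<noteq> 0" using n by simp
  define B where "B = ((m+1) * (1 - v * X)) / (n+1) + (1/(m+1)) * ((m+1)^2 * (1 - (n+1) * X + n * (v * X)) / (n+1)) / m"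
  define \<Delta> where "\<Delta> = (m+1)^2 - X * (m*(m+1) + (n+1))"
  have "(m+1) * (1 - v * X) = (m+1) - (v * (m+1)) * X"
    by (simp add: algebra_simps)
  then have t1: "((m+1) * (1 - v * X)) / (n+1) = ((m+1) - m * X) / (n+1)" using hv by simp
  have t2: "(1/(m+1)) * ((m+1)^2 * (1 - (n+1) * X + n * (v * X)) / (n+1)) / m
      = ((m+1) * (1 - (n+1) * X) + n * m * X) / ((n+1) * m)"
  proof -
    have "(m+1)^2 * (1 - (n+1) * X + n * (v * X)) = (m+1) * ((m+1) * (1 - (n+1) * X) + n * X * (v * (m+1)))"
      by (simp add: algebra_simps power2_eq_square)
    also have "\<dots> = (m+1) * ((m+1) * (1 - (n+1) * X) + n * m * X)" using hv by simp
    finally have e: "(m+1)^2 * (1 - (n+1) * X + n * (v * X)) = (m+1) * ((m+1) * (1 - (n+1) * X) + n * m * X)" .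
    show ?thesis unfolding e using m1 by simp
  qed
  have "B = ((m+1) - m * X) / (n+1) + ((m+1) * (1 - (n+1) * X) + n * m * X) / ((n+1) * m)"
    unfolding B_def t1 t2 ..
  also have "\<dots> = (m * ((m+1) - m * X) + ((m+1) * (1 - (n+1) * X) + n * m * X)) / ((n+1) * m)"
    using m n1 by (simp add: add_divide_distrib)
  also have "m * ((m+1) - m * X) + ((m+1) * (1 - (n+1) * X) + n * m * X) = \<Delta>"
    unfolding \<Delta>_def by (simp add: algebra_simps power2_eq_square)
  finally have "B = \<Delta> / ((n+1) * m)" .
  moreover have "\<Delta> \<noteq> 0" using d unfolding \<Delta>_def .
  moreover have "(n+1) * m \<noteq> 0" using m n1 by simp
  moreover have "\<And>a D. a \<noteq> 0 \<Longrightarrow> D \<noteq> 0 \<Longrightarrow> a * X / D * (D / a) = X" by simp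
  ultimately show ?thesis unfolding B_def[symmetric] \<Delta>_def[symmetric] by (metis mult.assoc)
qed

lemma key_identity:
  assumes K: "K \<ge> 2" and L: "L \<ge> 2"
  shows "sstar K L * (Wf L (1 / real K) + (1 / real K) * Dd L (1 / real K) / (real K - 1)) = (1 - 1 / real K)^(L-1)"
proof -
  obtain m n where mn: "m \<ge> 1" "n \<ge> 1" "real K = m + 1" "L = Suc n"
    and s: "sstar K L = real (Suc n) * m^(Suc n) / ((m+1)^(n+2) - m^n * (m*(m+1) + real (Suc n)))"
    using sstar_alt[OF K L] by blast
  define r where "r = m / (m+1)"
  define X where "X = r^n"
  have m1: "m + 1 > 0" using mn by simp
  have hv: "r * (m+1) = m" unfolding r_def using m1 by simp
  have r1: "1 - 1 / real K = r" unfolding r_def mn(3) using m1 by (simp add: field_simps)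
  have a: "1 / real K = 1 / (m+1)" using mn by simp
  have omr: "1 - r = 1 / (m+1)" using r1 a by simp
  have mX: "m^n = X * (m+1)^n" unfolding X_def r_def using m1 by (simp add: power_divide)
  have W: "Wf L (1 / real K) = (m+1) * (1 - r * X) / (real n + 1)"
  proof -
    have "(\<Sum>k<Suc n. r^k) = (1 - r^(Suc n)) / (1 - r)"
      using sum_gp_strict[of r "Suc n"] hv mn by (auto simp: r_def)
    also have "\<dots> = (m+1) * (1 - r * X)" unfolding omr X_def by simp
    finally show ?thesis unfolding Wf_def mn(4) r1[symmetric] by simp
  qed
  have Dv: "Dd L (1 / real K) = (m+1)^2 * (1 - (real n + 1) * X + real n * (r * X)) / (real n + 1)"
  proof -
    define S where "S = (\<Sum>k<Suc n. real k * r^(k-1))"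
    have e: "(1-r)^2 * S = 1 - (real n + 1) * X + real n * (r * X)"
      using dsum_closed[of r n] unfolding X_def S_def by (simp add: mult.commute)
    have o: "(m+1)^2 * (1-r)^2 = 1" unfolding omr using m1 by (simp add: power2_eq_square)
    have "S = ((m+1)^2 * (1-r)^2) * S" unfolding o by simp
    also have "\<dots> = (m+1)^2 * ((1-r)^2 * S)" by (simp only: mult.assoc)
    finally have "S = (m+1)^2 * (1 - (real n + 1) * X + real n * (r * X))" unfolding e .
    then have "(\<Sum>k<Suc n. real k * r^(k-1)) = (m+1)^2 * (1 - (real n + 1) * X + real n * (r * X))"
      unfolding S_def .
    then show ?thesis unfolding Dd_def mn(4) r1[symmetric] by simp
  qed
  have Dpos: "(m+1)^(n+2) - m^n * (m*(m+1) + real (Suc n)) > 0"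
  proof (rule ccontr)
    assume "\<not> ?thesis"
    then have "sstar K L \<le> 0" unfolding s using mn by (intro divide_nonneg_nonpos) auto
    then show False using sstar_bounds[OF K L] by simp
  qed
  have Deq: "(m+1)^(n+2) - m^n * (m*(m+1) + real (Suc n)) = (m+1)^n * ((m+1)^2 - X * (m*(m+1) + (real n+1)))"
    unfolding mX by (simp add: algebra_simps power_add power2_eq_square)
  have Yp: "(m+1)^n > 0" using m1 by simp
  have d: "(m+1)^2 - X * (m*(m+1) + (real n+1)) > 0" using Dpos Yp m1 unfolding Deq
    by (simp add: zero_less_mult_iff)
  have s2: "sstar K L = (real n + 1) * m * X / ((m+1)^2 - X * (m*(m+1) + (real n+1)))"
  proof -
    have num: "real (Suc n) * m^(Suc n) = (m+1)^n * ((real n + 1) * m * X)"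
      unfolding power_Suc mX by (simp add: algebra_simps)
    have "sstar K L = ((m+1)^n * ((real n + 1) * m * X)) / ((m+1)^n * ((m+1)^2 - X * (m*(m+1) + (real n+1))))"
      unfolding s Deq num ..
    also have "\<dots> = (real n + 1) * m * X / ((m+1)^2 - X * (m*(m+1) + (real n+1)))"
      using Yp m1 by (intro mult_divide_mult_cancel_left) simp
    finally show ?thesis .
  qed
  have "sstar K L * (Wf L (1 / real K) + (1 / real K) * Dd L (1 / real K) / (real K - 1)) = X"
    unfolding s2 W Dv unfolding a using key_alg[of m "real n" X r] mn d hv by (simp add: mn(3))
  then show ?thesis unfolding r1 X_def mn(4) by simp
qed

definition Fp :: "nat \<Rightarrow> nat \<Rightarrow> real \<Rightarrow> real" where
  "Fp K L t = 1 - (1-t)^L - sstar K L * real L * t * Wf L ((1-t) / (real K - 1))"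

lemma F_le:
  assumes K: "K \<ge> 2" and L: "L \<ge> 2" and t: "0 \<le> t" "t \<le> 1"
  shows "Fp K L t \<le> Fp K L (1 / real K)"
proof -
  define \<sigma> where "\<sigma> = sstar K L"
  define c1 where "c1 = 1 / (real K - 1)"
  have c1p: "c1 > 0" unfolding c1_def using K by simp
  have u_eq: "(1-t) / (real K - 1) = (1-t) * c1" for t unfolding c1_def by simp
  define F1 where "F1 = (\<lambda>t. real L * (1-t)^(L-1) - \<sigma> * real L * (Wf L ((1-t)*c1) + t * Dd L ((1-t)*c1) * c1))"
  define F2 where "F2 = (\<lambda>t. - (real L * real (L-1) * (1-t)^(L-2)) - \<sigma> * real L * (2 * Dd L ((1-t)*c1) * c1 + t * Ed L ((1-t)*c1) * c1^2))"
  have du: "DERIV (\<lambda>t. (1-t)*c1) t :> - c1" for t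
    by (rule derivative_eq_intros refl | simp)+
  have dW: "DERIV (\<lambda>t. Wf L ((1-t)*c1)) t :> Dd L ((1-t)*c1) * c1" for t
    using DERIV_chain2[OF DERIV_Wf du] by simp
  have dD: "DERIV (\<lambda>t. Dd L ((1-t)*c1)) t :> Ed L ((1-t)*c1) * c1" for t
    using DERIV_chain2[OF DERIV_Dd du] by simp
  have dF: "DERIV (\<lambda>t. - Fp K L t) t :> - F1 t" for t
  proof -
    have "DERIV (\<lambda>t. - (1 - (1-t)^L - \<sigma> * real L * (t * Wf L ((1-t)*c1)))) t :>
        - (0 - (- (real L * (1-t)^(L-1))) - \<sigma> * real L * (1 * Wf L ((1-t)*c1) + Dd L ((1-t)*c1) * c1 * t))"
      by (intro DERIV_minus DERIV_diff DERIV_const DERIV_pow1m DERIV_cmult DERIV_mult DERIV_ident dW)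
    then show ?thesis unfolding Fp_def F1_def u_eq \<sigma>_def
      by (rule DERIV_cong_ev[THEN iffD1, rotated 3]) (auto simp: algebra_simps)
  qed
  have dF1: "DERIV (\<lambda>t. - F1 t) t :> - F2 t" for t
  proof -
    have p: "DERIV (\<lambda>t. (1-t)^(L-1)) t :> - (real (L-1) * (1-t)^(L-1-1))" by (rule DERIV_pow1m)
    have "DERIV (\<lambda>t. - (real L * (1-t)^(L-1) - \<sigma> * real L * (Wf L ((1-t)*c1) + (t * Dd L ((1-t)*c1)) * c1))) t :>
        - (real L * (- (real (L-1) * (1-t)^(L-1-1))) - \<sigma> * real L * (Dd L ((1-t)*c1) * c1 + ((1 * Dd L ((1-t)*c1) + Ed L ((1-t)*c1) * c1 * t) * c1 + 0 * (t * Dd L ((1-t)*c1)))))"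
      by (intro DERIV_minus DERIV_diff DERIV_cmult DERIV_add DERIV_mult DERIV_ident dW dD p DERIV_const)
    moreover have "L - 1 - 1 = L - 2" by simp
    ultimately show ?thesis unfolding F1_def F2_def
      by (auto simp: algebra_simps power2_eq_square elim!: DERIV_cong)
  qed
  have F2le: "0 \<le> - F2 t" if "t \<in> {0..1}" for t
  proof -
    have u1: "(1-t)*c1 \<le> 1"
    proof -
      have "(1-t)*c1 \<le> 1 * c1" using that c1p by (intro mult_right_mono) auto
      also have "c1 \<le> 1" unfolding c1_def using K by simp
      finally show ?thesis by simp
    qed
    have s0: "\<sigma> \<ge> 0" unfolding \<sigma>_def using sstar_bounds[OF K L] by simp
    have "0 \<le> real L * real (L-1) * (1-t)^(L-2)" using that by simp
    moreover have "0 \<le> \<sigma> * real L * (2 * Dd L ((1-t)*c1) * c1 + t * Ed L ((1-t)*c1) * c1^2)"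
      using that s0 c1p Dd_nonneg[OF u1] Ed_nonneg[OF u1] by (intro mult_nonneg_nonneg add_nonneg_nonneg) auto
    ultimately show ?thesis unfolding F2_def by simp
  qed
  have conv: "convex_on {0..1} (\<lambda>t. - Fp K L t)"
    by (rule f''_ge0_imp_convex[OF convex_real_interval(5) dF dF1 F2le])
  define a where "a = 1 / real K"
  have a01: "a \<in> {0<..<1}" unfolding a_def using K by simp
  have ua: "(1-a)*c1 = a" unfolding a_def c1_def using K by (simp add: field_simps)
  have F1a: "F1 a = 0"
  proof -
    have "F1 a = real L * ((1-a)^(L-1) - \<sigma> * (Wf L a + a * Dd L a / (real K - 1)))"
      unfolding F1_def ua unfolding c1_def by (simp add: algebra_simps)
    also have "\<sigma> * (Wf L a + a * Dd L a / (real K - 1)) = (1-a)^(L-1)"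
      unfolding \<sigma>_def a_def using key_identity[OF K L] by simp
    finally show ?thesis by simp
  qed
  have "- Fp K L t - (- Fp K L a) \<ge> (- F1 a) * (t - a)"
    by (rule convex_on_imp_above_tangent[OF conv])
       (use a01 t in \<open>auto intro: has_field_derivative_at_within dF\<close>)
  then show ?thesis using F1a unfolding a_def by simp
qed



lemma sum_split_i:
  fixes p :: "nat \<Rightarrow> real"
  assumes "i < K"
  shows "(\<Sum>k<K. p k) = p i + (\<Sum>k\<in>{..<K}-{i}. p k)"
  using assms by (simp add: sum.remove)

lemma other_exists:
  assumes "K \<ge> 2" "i < (K::nat)"
  obtains j where "j < K" "j \<noteq> i"
proof -
  show ?thesis
  proof (cases "i = 0")
    case True then show ?thesis using that[of 1] assms by auto
  next
    case False then show ?thesis using that[of 0] assms by auto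
  qed
qed

lemma Fp_1: "L \<ge> 1 \<Longrightarrow> Fp K L 1 = 1 - sstar K L * real L"
  unfolding Fp_def using Wf_0[of L] by simp

lemma Fp_a: assumes "K \<ge> 2" shows "Fp K L (1 / real K) = (1 - sstar K L) * (1 - (1 - 1 / real K)^L)"
proof -
  have u: "(1 - 1 / real K) / (real K - 1) = 1 / real K" using assms by (simp add: field_simps)
  have "sstar K L * real L * (1 / real K) * Wf L (1 / real K) = sstar K L * (real L * (1 / real K) * Wf L (1 / real K))"
    by simp
  also have "\<dots> = sstar K L * (1 - (1 - 1 / real K)^L)" unfolding G_eq ..
  finally show ?thesis unfolding Fp_def u by (simp add: algebra_simps)
qed

lemma part1:
  assumes K: "K \<ge> 2" and L: "L \<ge> 2"
    and H: "\<forall>s \<in> offers K. s \<noteq> (\<lambda>_. 0) \<longrightarrow> (\<exists>!p. ESS K L s p)"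
  shows "SPNE K L (\<lambda>i. if i < K then sstar K L else 0)"
    and "resp_strategy K L (\<lambda>i. if i < K then sstar K L else 0) = (\<lambda>i. if i < K then 1 / real K else 0)"
proof -
  define \<sigma> where "\<sigma> = sstar K L"
  define sp where "sp = (\<lambda>i. if i < K then \<sigma> else (0::real))"
  define un where "un = (\<lambda>i. if i < K then 1 / real K else (0::real))"
  have \<sigma>: "0 < \<sigma>" "\<sigma> < 1" unfolding \<sigma>_def using sstar_bounds[OF K L] by auto
  have L1: "L \<ge> 1" using L by simp
  have spo: "sp \<in> offers K" unfolding sp_def offers_def using \<sigma> by auto
  have spnz: "sp \<noteq> (\<lambda>_. 0)"
  proof
    assume "sp = (\<lambda>_. 0)"
    then have "sp 0 = 0" by simp
    then show False unfolding sp_def using K \<sigma> by (simp split: if_splits)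
  qed
  have unS: "un \<in> simplex K" unfolding un_def simplex_def using K by auto
  have unNE: "NE K L sp un (\<sigma> * Wf L (1 / real K))"
    unfolding NE_def using unS by (auto simp: sp_def un_def)
  have R: "resp_strategy K L sp = un" by (rule resp_eq[OF H L spo spnz unNE])
  have Pay: "prop_payoff K L sp i = Fp K L (1 / real K)" if "i < K" for i
    unfolding prop_payoff_def R Fp_a[OF K] using that by (simp add: sp_def un_def \<sigma>_def)
  have Fa0: "Fp K L (1 / real K) \<ge> 0"
  proof -
    have "(1 - 1 / real K)^L \<le> 1" using K by (intro power_le_one) auto
    then show ?thesis unfolding Fp_a[OF K] using \<sigma> \<sigma>_def by simp
  qed
  have dev: "prop_payoff K L (sp(i := x)) i \<le> prop_payoff K L sp i" if i: "i < K" and x: "0 \<le> x" "x \<le> 1" for i x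
  proof -
    define s' where "s' = sp(i := x)"
    obtain j0 where j0: "j0 < K" "j0 \<noteq> i" using other_exists[OF K i] .
    have s'o: "s' \<in> offers K" unfolding s'_def sp_def offers_def using \<sigma> x i by auto
    have s'nz: "s' \<noteq> (\<lambda>_. 0)"
    proof
      assume "s' = (\<lambda>_. 0)"
      then have "s' j0 = 0" by simp
      then show False unfolding s'_def sp_def using j0 \<sigma> by simp
    qed
    define p where "p = resp_strategy K L s'"
    obtain c where N: "NE K L s' p c" using resp_NE[OF H L s'o s'nz] unfolding p_def by blast
    have pS: "p \<in> simplex K" using N by (simp add: NE_def)
    have p01: "0 \<le> p k" "p k \<le> 1" for k using simplex_nonneg[OF pS] simplex_le1[OF pS] by auto
    have le: "s' k * Wf L (p k) \<le> c" if "k < K" for k using N that by (simp add: NE_def)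
    have eq: "s' k * Wf L (p k) = c" if "k < K" "p k > 0" for k using N that by (simp add: NE_def)
    have s'o_k: "s' k = \<sigma>" if "k < K" "k \<noteq> i" for k using that unfolding s'_def sp_def by simp
    define t where "t = p i"
    have sumK: "(\<Sum>k<K. p k) = 1" using pS by (simp add: simplex_def)
    have split: "t + (\<Sum>k\<in>{..<K}-{i}. p k) = 1" using sum_split_i[OF i, of p] sumK unfolding t_def by simp
    have payoff: "prop_payoff K L s' i = (1 - x) * (1 - (1 - t)^L)"
    proof -
      have "s' i = x" unfolding s'_def by simp
      then show ?thesis unfolding prop_payoff_def p_def[symmetric] t_def[symmetric] by simp
    qed
    have goal_r: "prop_payoff K L sp i = Fp K L (1 / real K)" using Pay[OF i] .
    show ?thesis unfolding s'_def[symmetric] payoff goal_r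
    proof (cases "t = 0")
      case True then show "(1 - x) * (1 - (1 - t)^L) \<le> Fp K L (1 / real K)" using Fa0 by simp
    next
      case False
      then have tp: "t > 0" using p01[of i] unfolding t_def by simp
      have ci: "x * Wf L t = c" using eq[OF i] tp unfolding t_def s'_def by simp
      show "(1 - x) * (1 - (1 - t)^L) \<le> Fp K L (1 / real K)"
      proof (cases "t = 1")
        case True
        have "(\<Sum>k\<in>{..<K}-{i}. p k) = 0" using split True by simp
        then have "\<forall>k\<in>{..<K}-{i}. p k = 0" using p01 by (subst (asm) sum_nonneg_eq_0_iff) auto
        then have "p j0 = 0" using j0 by auto
        then have "\<sigma> \<le> c" using le[OF j0(1)] s'o_k[OF j0] Wf_0[OF L1] by simp
        then have "\<sigma> \<le> x / real L" using ci True Wf_1[OF L1] by simp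
        then have "\<sigma> * real L \<le> x" using L by (simp add: field_simps)
        then have "(1 - x) * (1 - (1 - t)^L) \<le> Fp K L 1" using True Fp_1[OF L1, of K] L unfolding \<sigma>_def by (simp add: power_0_left)
        also have "\<dots> \<le> Fp K L (1 / real K)" by (rule F_le[OF K L]) auto
        finally show ?thesis .
      next
        case False
        then have t1: "t < 1" using p01[of i] unfolding t_def by simp
        have pos: "(\<Sum>k\<in>{..<K}-{i}. p k) > 0" using split t1 by simp
        have "\<exists>j\<in>{..<K}-{i}. p j > 0"
        proof (rule ccontr)
          assume "\<not> ?thesis"
          then have "\<forall>j\<in>{..<K}-{i}. p j \<le> 0" using not_less by blast
          then have "(\<Sum>k\<in>{..<K}-{i}. p k) \<le> 0" by (intro sum_nonpos) auto
          then show False using pos by simp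
        qed
        then obtain j1 where j1: "j1 \<in> {..<K}-{i}" "p j1 > 0" by blast
        have j1K: "j1 < K" "j1 \<noteq> i" using j1 by auto
        have cj1: "\<sigma> * Wf L (p j1) = c" using eq[OF j1K(1) j1(2)] s'o_k[OF j1K] by simp
        have "Wf L (p j1) < 1" using Wf_lt1[OF L j1(2) p01(2)] .
        then have "\<sigma> * Wf L (p j1) < \<sigma> * 1" using \<sigma> by (intro mult_strict_left_mono) auto
        then have clt: "c < \<sigma>" using cj1 by simp
        have allpos: "p k > 0" if "k < K" "k \<noteq> i" for k
        proof (rule ccontr)
          assume "\<not> p k > 0"
          then have "p k = 0" using p01[of k] by simp
          then have "\<sigma> \<le> c" using le[OF that(1)] s'o_k[OF that] Wf_0[OF L1] by simp
          then show False using clt by simp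
        qed
        have alleq: "p k = p j1" if "k < K" "k \<noteq> i" for k
        proof -
          have "\<sigma> * Wf L (p k) = \<sigma> * Wf L (p j1)" using eq[OF that(1) allpos[OF that]] s'o_k[OF that] cj1 by simp
          then have w: "Wf L (p k) = Wf L (p j1)" using \<sigma> by simp
          show ?thesis
          proof (rule ccontr)
            assume "p k \<noteq> p j1"
            then consider "p k < p j1" | "p j1 < p k" by linarith
            then show False
            proof cases
              case 1 then show False using Wf_strict_anti[OF L p01(1) 1 p01(2)] w by simp
            next
              case 2 then show False using Wf_strict_anti[OF L p01(1) 2 p01(2)] w by simp
            qed
          qed
        qed
        have "(\<Sum>k\<in>{..<K}-{i}. p k) = (\<Sum>k\<in>{..<K}-{i}. p j1)"
          using alleq by (intro sum.cong) auto
        also have "\<dots> = (real K - 1) * p j1" using i by simp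
        finally have "t + (real K - 1) * p j1 = 1" using split by simp
        then have u: "p j1 = (1 - t) / (real K - 1)" using K by (simp add: field_simps)
        have g: "1 - (1-t)^L = real L * t * Wf L t" using G_eq[of L t] by simp
        have "(1 - x) * (1 - (1 - t)^L) = (1 - (1-t)^L) - real L * t * (x * Wf L t)"
          unfolding g by (simp add: algebra_simps)
        also have "\<dots> = Fp K L t" unfolding ci cj1[symmetric] u Fp_def \<sigma>_def by (simp add: algebra_simps)
        also have "\<dots> \<le> Fp K L (1 / real K)" by (rule F_le[OF K L]) (use tp t1 in auto)
        finally show ?thesis .
      qed
    qed
  qed
  show "SPNE K L (\<lambda>i. if i < K then sstar K L else 0)"
    unfolding SPNE_def sp_def[unfolded \<sigma>_def, symmetric] using spo dev by auto
  show "resp_strategy K L (\<lambda>i. if i < K then sstar K L else 0) = (\<lambda>i. if i < K then 1 / real K else 0)"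
    using R unfolding sp_def un_def \<sigma>_def .
qed



definition Winv :: "nat \<Rightarrow> real \<Rightarrow> real" where
  "Winv L y = (THE x. 0 \<le> x \<and> x \<le> 1 \<and> Wf L x = y)"

lemma Wf_inj:
  assumes L: "L \<ge> 2" and "0 \<le> x" "x \<le> 1" "0 \<le> y" "y \<le> 1" "Wf L x = Wf L y"
  shows "x = y"
proof (rule ccontr)
  assume "x \<noteq> y"
  then consider "x < y" | "y < x" by linarith
  then show False
  proof cases
    case 1 then show False using Wf_strict_anti[OF L assms(2) 1 assms(5)] assms(6) by simp
  next
    case 2 then show False using Wf_strict_anti[OF L assms(4) 2 assms(3)] assms(6) by simp
  qed
qed

lemma Winv_Wf: assumes L: "L \<ge> 2" and x: "0 \<le> x" "x \<le> 1" shows "Winv L (Wf L x) = x"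
  unfolding Winv_def
  by (rule the_equality) (use x Wf_inj[OF L] in auto)

lemma Winv_props:
  assumes L: "L \<ge> 2" and y: "1 / real L \<le> y" "y \<le> 1"
  shows "0 \<le> Winv L y" "Winv L y \<le> 1" "Wf L (Winv L y) = y"
proof -
  have L1: "L \<ge> 1" using L by simp
  obtain x where x: "0 \<le> x" "x \<le> 1" "Wf L x = y"
    using IVT2[of "Wf L" 1 y 0] y Wf_0[OF L1] Wf_1[OF L1] Wf_cont by auto
  have "Winv L y = x" using Winv_Wf[OF L x(1,2)] x(3) by simp
  then show "0 \<le> Winv L y" "Winv L y \<le> 1" "Wf L (Winv L y) = y" using x by auto
qed

lemma Wf_range:
  assumes L: "L \<ge> 2" and x: "0 < x" "x < 1"
  shows "1 / real L < Wf L x" "Wf L x < 1"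
proof -
  have L1: "L \<ge> 1" using L by simp
  show "1 / real L < Wf L x" using Wf_strict_anti[OF L _ x(2)] x Wf_1[OF L1] by simp
  show "Wf L x < 1" using Wf_lt1[OF L] x by simp
qed

lemma DERIV_Winv:
  assumes L: "L \<ge> 2" and x: "0 < x" "x < 1"
  shows "DERIV (Winv L) (Wf L x) :> inverse (- Dd L x)"
proof (rule DERIV_inverse_function[where f = "Wf L" and a = "1 / real L" and b = 1])
  show "DERIV (Wf L) (Winv L (Wf L x)) :> - Dd L x"
    using Winv_Wf[OF L] x DERIV_Wf by simp
  show "- Dd L x \<noteq> 0" using Dd_pos[OF L x(2)] by simp
  show "1 / real L < Wf L x" "Wf L x < 1" using Wf_range[OF L x] by auto
  show "Wf L (Winv L y) = y" if "1 / real L < y" "y < 1" for y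
    using Winv_props[OF L] that by auto
  show "isCont (Winv L) (Wf L x)"
    by (rule isCont_inverse_function2[where a = 0 and b = 1]) (use x Winv_Wf[OF L] Wf_cont in auto)
qed

lemma FOC:
  assumes K: "K \<ge> 2" and L: "L \<ge> 2"
    and H: "\<forall>s \<in> offers K. s \<noteq> (\<lambda>_. 0) \<longrightarrow> (\<exists>!p. ESS K L s p)"
    and SP: "SPNE K L s"
    and R: "resp_strategy K L s = p" and pS: "p \<in> simplex K"
    and c: "c > 0" and sc: "\<forall>k<K. s k * Wf L (p k) = c"
    and p01: "\<forall>k<K. 0 < p k \<and> p k < 1"
    and i: "i < K" and si: "s i < 1"
  shows "((1 - p i)^(L-1) - c) * (\<Sum>j\<in>{..<K}-{i}. Wf L (p j) / Dd L (p j)) = c * p i"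
proof -
  have L1: "L \<ge> 1" using L by simp
  have so: "s \<in> offers K" using SP by (simp add: SPNE_def)
  define J where "J = {..<K} - {i}"
  have finJ: "finite J" unfolding J_def by simp
  define w where "w = (\<lambda>j. Wf L (p j))"
  define P where "P = (\<lambda>j la. Winv L (la * w j))"
  define tf where "tf = (\<lambda>la. 1 - (\<Sum>j\<in>J. P j la))"
  define S' where "S' = - (\<Sum>j\<in>J. inverse (- Dd L (p j)) * w j)"
  define S where "S = (\<Sum>j\<in>J. Wf L (p j) / Dd L (p j))"
  have SS: "S' = S" unfolding S'_def S_def w_def
    by (simp add: sum_negf[symmetric] divide_inverse mult.commute)
  have pjJ: "0 < p j" "p j < 1" if "j \<in> J" for j using p01 that unfolding J_def by auto
  have dP: "DERIV (P j) 1 :> inverse (- Dd L (p j)) * w j" if "j \<in> J" for j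
  proof -
    have d1: "DERIV (Winv L) ((\<lambda>la. la * w j) 1) :> inverse (- Dd L (p j))"
      using DERIV_Winv[OF L pjJ[OF that]] unfolding w_def by simp
    have d2: "DERIV (\<lambda>la. la * w j) 1 :> w j" by (rule derivative_eq_intros refl | simp)+
    show ?thesis unfolding P_def using DERIV_chain2[OF d1 d2] by simp
  qed
  have dtf: "DERIV tf 1 :> S'"
  proof -
    have "DERIV (\<lambda>la. 1 - (\<Sum>j\<in>J. P j la)) 1 :> 0 - (\<Sum>j\<in>J. inverse (- Dd L (p j)) * w j)"
      by (intro DERIV_diff DERIV_const DERIV_sum dP)
    then show ?thesis unfolding tf_def S'_def by simp
  qed
  have P1: "P j 1 = p j" if "j \<in> J" for j
    unfolding P_def w_def using Winv_Wf[OF L] pjJ[OF that] by simp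
  have sumK: "(\<Sum>k<K. p k) = 1" using pS by (simp add: simplex_def)
  have tf1: "tf 1 = p i"
  proof -
    have "(\<Sum>j\<in>J. P j 1) = (\<Sum>j\<in>J. p j)" using P1 by (intro sum.cong) auto
    then show ?thesis unfolding tf_def J_def using sum_split_i[OF i, of p] sumK by simp
  qed
  define Phi where "Phi = (\<lambda>la. (1 - (1 - tf la)^L) - real L * c * (la * tf la))"
  have dpow: "DERIV (\<lambda>la. (1 - tf la)^L) 1 :> - (real L * (1 - tf 1)^(L-1)) * S'"
    using DERIV_chain2[OF DERIV_pow1m dtf] by simp
  have dPhi: "DERIV Phi 1 :> (0 - - (real L * (1 - tf 1)^(L-1)) * S') - real L * c * (1 * tf 1 + S' * 1)"
    unfolding Phi_def by (intro DERIV_diff DERIV_const DERIV_cmult DERIV_mult DERIV_ident dpow dtf)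
  have ctf: "isCont tf 1" using DERIV_isCont[OF dtf] .
  define xf where "xf = (\<lambda>la. la * c / Wf L (tf la))"
  have pi01: "0 < p i" "p i < 1" using p01 i by auto
  have Wpi: "Wf L (p i) > 0" using Wf_pos[OF L1] pi01 by simp
  have cWtf: "isCont (\<lambda>la. Wf L (tf la)) 1" by (rule isCont_o2[OF ctf Wf_cont])
  have cxf: "isCont xf 1" unfolding xf_def
    by (intro continuous_intros cWtf) (use Wpi tf1 in simp)
  have xf1: "xf 1 = s i" unfolding xf_def tf1 using sc i Wpi by (auto simp: field_simps)
  have si0: "s i > 0"
  proof -
    have "s i * Wf L (p i) = c" using sc i by simp
    then show ?thesis using c Wpi so i by (auto simp: offers_def zero_less_mult_iff)
  qed
  have ev1: "eventually (\<lambda>la. \<forall>j\<in>J. 1 / real L < la * w j \<and> la * w j < 1) (at 1)"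
  proof (rule eventually_ball_finite[OF finJ], intro ballI)
    fix j assume j: "j \<in> J"
    have lim: "((\<lambda>la. la * w j) \<longlongrightarrow> w j) (at 1)" by (intro tendsto_eq_intros) auto
    have "1 / real L < w j" "w j < 1" using Wf_range[OF L pjJ[OF j]] unfolding w_def by auto
    then show "eventually (\<lambda>la. 1 / real L < la * w j \<and> la * w j < 1) (at 1)"
      using order_tendstoD(1)[OF lim] order_tendstoD(2)[OF lim] by (auto intro: eventually_conj)
  qed
  have ev2: "eventually (\<lambda>la. 0 < tf la \<and> tf la < 1) (at 1)"
  proof -
    have lim: "(tf \<longlongrightarrow> p i) (at 1)" using ctf tf1 by (simp add: isCont_def)
    show ?thesis using order_tendstoD(1)[OF lim] order_tendstoD(2)[OF lim] pi01 by (auto intro: eventually_conj)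
  qed
  have ev3: "eventually (\<lambda>la. 0 < xf la \<and> xf la < 1) (at 1)"
  proof -
    have lim: "(xf \<longlongrightarrow> s i) (at 1)" using cxf xf1 by (simp add: isCont_def)
    show ?thesis using order_tendstoD(1)[OF lim] order_tendstoD(2)[OF lim] si0 si by (auto intro: eventually_conj)
  qed
  have "eventually (\<lambda>la. (\<forall>j\<in>J. 1 / real L < la * w j \<and> la * w j < 1) \<and> (0 < tf la \<and> tf la < 1) \<and> (0 < xf la \<and> xf la < 1)) (at 1)"
    by (intro eventually_conj ev1 ev2 ev3)
  then obtain d where d: "d > 0" and
    dd: "\<And>la. la \<noteq> 1 \<Longrightarrow> dist la 1 < d \<Longrightarrow> (\<forall>j\<in>J. 1 / real L < la * w j \<and> la * w j < 1) \<and> (0 < tf la \<and> tf la < 1) \<and> (0 < xf la \<and> xf la < 1)"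
    unfolding eventually_at by auto
  have Phi1: "Phi 1 = prop_payoff K L s i"
  proof -
    have "prop_payoff K L s i = (1 - s i) * (1 - (1 - p i)^L)" unfolding prop_payoff_def R ..
    also have "\<dots> = (1 - (1 - p i)^L) - real L * p i * (s i * Wf L (p i))"
    proof -
      have g: "1 - (1 - p i)^L = real L * p i * Wf L (p i)" using G_eq[of L "p i"] by simp
      show ?thesis unfolding g by (simp add: algebra_simps)
    qed
    also have "\<dots> = Phi 1" unfolding Phi_def tf1 using sc i by simp
    finally show ?thesis by simp
  qed
  have loc: "\<forall>y. \<bar>1 - y\<bar> < d \<longrightarrow> Phi y \<le> Phi 1"
  proof (intro allI impI)
    fix la assume la: "\<bar>1 - la\<bar> < d"
    show "Phi la \<le> Phi 1"
    proof (cases "la = 1")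
      case True then show ?thesis by simp
    next
      case False
      have "dist la 1 < d" using la by (simp add: dist_real_def abs_minus_commute)
      from dd[OF False this] have C1: "\<forall>j\<in>J. 1 / real L < la * w j \<and> la * w j < 1"
        and C2: "0 < tf la" "tf la < 1" and C3: "0 < xf la" "xf la < 1" by auto
      define q where "q = (\<lambda>k. if k = i then tf la else if k < K then P k la else 0)"
      define s' where "s' = s(i := xf la)"
      have Pk: "0 \<le> P k la" "P k la \<le> 1" "Wf L (P k la) = la * w k" if "k \<in> J" for k
        using Winv_props[OF L, of "la * w k"] C1 that unfolding P_def by auto
      have qS: "q \<in> simplex K"
      proof -
        have "(\<Sum>k<K. q k) = q i + (\<Sum>k\<in>J. q k)" unfolding J_def by (rule sum_split_i[OF i])
        also have "(\<Sum>k\<in>J. q k) = (\<Sum>k\<in>J. P k la)" unfolding q_def J_def by (intro sum.cong) auto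
        finally have "(\<Sum>k<K. q k) = 1" unfolding q_def tf_def by simp
        moreover have "\<forall>k. 0 \<le> q k" unfolding q_def using C2 Pk(1) J_def by auto
        moreover have "\<forall>k\<ge>K. q k = 0" unfolding q_def using i by auto
        ultimately show ?thesis unfolding simplex_def by auto
      qed
      have WtfP: "Wf L (tf la) > 0" using Wf_pos[OF L1] C2 by simp
      have qv: "s' k * Wf L (q k) = la * c" if "k < K" for k
      proof (cases "k = i")
        case True
        then show ?thesis unfolding s'_def q_def xf_def using WtfP by simp
      next
        case False
        then have kJ: "k \<in> J" unfolding J_def using that by simp
        have "s' k * Wf L (q k) = s k * (la * w k)" unfolding s'_def q_def using False that Pk(3)[OF kJ] by simp
        also have "\<dots> = la * c" using sc that unfolding w_def by (simp add: algebra_simps)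
        finally show ?thesis .
      qed
      have NEq: "NE K L s' q (la * c)" unfolding NE_def using qS qv by auto
      have s'o: "s' \<in> offers K" using so C3 i unfolding s'_def offers_def by auto
      have s'nz: "s' \<noteq> (\<lambda>_. 0)"
      proof
        assume "s' = (\<lambda>_. 0)"
        then have "s' i = 0" by simp
        then show False unfolding s'_def using C3 by simp
      qed
      have Rq: "resp_strategy K L s' = q" by (rule resp_eq[OF H L s'o s'nz NEq])
      have "prop_payoff K L s' i = (1 - xf la) * (1 - (1 - tf la)^L)"
        unfolding prop_payoff_def Rq unfolding s'_def q_def by simp
      also have "\<dots> = (1 - (1 - tf la)^L) - real L * tf la * (xf la * Wf L (tf la))"
      proof -
        have g: "1 - (1 - tf la)^L = real L * tf la * Wf L (tf la)" using G_eq[of L "tf la"] by simp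
        show ?thesis unfolding g by (simp add: algebra_simps)
      qed
      also have "\<dots> = Phi la" unfolding Phi_def xf_def using WtfP by (simp add: algebra_simps)
      finally have e: "prop_payoff K L s' i = Phi la" .
      have "prop_payoff K L s' i \<le> prop_payoff K L s i"
        using SP i C3 unfolding SPNE_def s'_def by auto
      then show ?thesis using e Phi1 by simp
    qed
  qed
  have z: "(0 - - (real L * (1 - tf 1)^(L-1)) * S') - real L * c * (1 * tf 1 + S' * 1) = 0"
    by (rule DERIV_local_max[OF dPhi d loc])
  then have "real L * (((1 - p i)^(L-1) - c) * S - c * p i) = 0" unfolding tf1 SS by (simp add: algebra_simps)
  then show ?thesis unfolding S_def J_def using L by simp
qed



lemma Dd_anti:
  assumes "0 \<le> x" "x \<le> y" "y \<le> 1"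
  shows "Dd L y \<le> Dd L x"
  unfolding Dd_def using assms
  by (intro divide_right_mono sum_mono mult_left_mono power_mono) auto

lemma pigeon:
  assumes q: "q \<in> simplex K" and K: "K \<ge> 1"
  obtains j where "j < K" "q j \<ge> 1 / real K"
proof -
  have "\<exists>j<K. q j \<ge> 1 / real K"
  proof (rule ccontr)
    assume "\<not> ?thesis"
    then have lt: "\<forall>j\<in>{..<K}. q j < 1 / real K" by auto
    have "(\<Sum>j<K. q j) < (\<Sum>j<K. 1 / real K)"
      by (rule sum_strict_mono) (use lt K in \<open>auto simp: lessThan_empty_iff\<close>)
    then show False using q K by (simp add: simplex_def)
  qed
  then show ?thesis using that by blast
qed

lemma all_pos:
  assumes K: "K \<ge> 2" and L: "L \<ge> 2"
    and H: "\<forall>s \<in> offers K. s \<noteq> (\<lambda>_. 0) \<longrightarrow> (\<exists>!p. ESS K L s p)"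
    and SP: "SPNE K L s" and snz: "s \<noteq> (\<lambda>_. 0)" and i: "i < K"
  shows "0 < resp_strategy K L s i \<and> s i < 1"
proof -
  have L1: "L \<ge> 1" using L by simp
  have so: "s \<in> offers K" using SP by (simp add: SPNE_def)
  define a where "a = 1 / real K"
  have a: "0 < a" "a \<le> 1" unfolding a_def using K by auto
  have Wa: "0 < Wf L a" "Wf L a < 1" using Wf_pos[OF L1 a(2)] Wf_lt1[OF L a] by auto
  define x0 where "x0 = (1 + Wf L a) / 2"
  have x0: "Wf L a < x0" "x0 < 1" "0 < x0" unfolding x0_def using Wa by auto
  define s' where "s' = s(i := x0)"
  have s'o: "s' \<in> offers K" using so x0 i unfolding s'_def offers_def by auto
  have s'nz: "s' \<noteq> (\<lambda>_. 0)"
  proof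
    assume "s' = (\<lambda>_. 0)"
    then have "s' i = 0" by simp
    then show False unfolding s'_def using x0 by simp
  qed
  define q where "q = resp_strategy K L s'"
  obtain c' where N: "NE K L s' q c'" using resp_NE[OF H L s'o s'nz] unfolding q_def by blast
  have qS: "q \<in> simplex K" using N by (simp add: NE_def)
  have qi: "q i > 0"
  proof (rule ccontr)
    assume "\<not> q i > 0"
    then have "q i = 0" using simplex_nonneg[OF qS, of i] by simp
    then have "x0 \<le> c'" using N i Wf_0[OF L1] unfolding NE_def s'_def by force
    obtain j where j: "j < K" "q j \<ge> a" using pigeon[OF qS] K unfolding a_def by force
    have qj: "q j > 0" using j a by simp
    have "s' j * Wf L (q j) = c'" using N j qj unfolding NE_def by auto
    moreover have "s' j \<le> 1" "0 \<le> s' j" using s'o j unfolding offers_def by auto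
    moreover have "Wf L (q j) \<le> Wf L a" using Wf_anti[OF L _ j(2) simplex_le1[OF qS]] a by simp
    moreover have "0 < Wf L (q j)" using Wf_pos[OF L1 simplex_le1[OF qS]] .
    ultimately have "c' \<le> 1 * Wf L (q j)" by (metis mult_right_mono less_imp_le)
    then have "c' \<le> Wf L a" using \<open>Wf L (q j) \<le> Wf L a\<close> by simp
    then show False using \<open>x0 \<le> c'\<close> x0 by simp
  qed
  have "(1 - q i)^L < 1^L"
    using qi simplex_le1[OF qS, of i] L by (intro power_strict_mono) auto
  then have "0 < (1 - x0) * (1 - (1 - q i)^L)" using x0 by simp
  also have "(1 - x0) * (1 - (1 - q i)^L) = prop_payoff K L s' i"
  proof -
    have "s' i = x0" unfolding s'_def by simp
    then show ?thesis unfolding prop_payoff_def q_def[symmetric] by simp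
  qed
  also have "\<dots> \<le> prop_payoff K L s i" using SP i x0 unfolding SPNE_def s'_def by auto
  finally have pp: "0 < (1 - s i) * (1 - (1 - resp_strategy K L s i)^L)" unfolding prop_payoff_def .
  have "s i \<le> 1" using so i by (simp add: offers_def)
  moreover have "s i \<noteq> 1" using pp by auto
  moreover have "resp_strategy K L s i \<noteq> 0" using pp by auto
  moreover have "resp_strategy K L s i \<ge> 0"
    using resp_NE[OF H L so snz] unfolding NE_def by (auto intro: simplex_nonneg)
  ultimately show ?thesis by auto
qed

lemma part2:
  assumes K: "K \<ge> 2" and L: "L \<ge> 2"
    and H: "\<forall>s \<in> offers K. s \<noteq> (\<lambda>_. 0) \<longrightarrow> (\<exists>!p. ESS K L s p)"
    and SP: "SPNE K L s" and snz: "s \<noteq> (\<lambda>_. 0)"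
  shows "s = (\<lambda>i. if i < K then sstar K L else 0)"
proof -
  have L1: "L \<ge> 1" using L by simp
  have so: "s \<in> offers K" using SP by (simp add: SPNE_def)
  define p where "p = resp_strategy K L s"
  define c where "c = resp_payoff K L s p p"
  have N: "NE K L s p c" using resp_NE[OF H L so snz] unfolding p_def c_def .
  have pS: "p \<in> simplex K" using N by (simp add: NE_def)
  have c0: "c > 0" by (rule NE_c_pos[OF L so snz N])
  have A: "0 < p k \<and> s k < 1" if "k < K" for k using all_pos[OF K L H SP snz that] unfolding p_def .
  have sumK: "(\<Sum>k<K. p k) = 1" using pS by (simp add: simplex_def)
  have p1: "p k < 1" if k: "k < K" for k
  proof -
    obtain j where j: "j < K" "j \<noteq> k" using other_exists[OF K k] .
    have "p j \<le> (\<Sum>k\<in>{..<K}-{k}. p k)"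
      by (rule member_le_sum) (use j simplex_nonneg[OF pS] in auto)
    then show ?thesis using sum_split_i[OF k, of p] sumK A[OF j(1)] by simp
  qed
  have p01: "\<forall>k<K. 0 < p k \<and> p k < 1" using A p1 by auto
  have sc: "\<forall>k<K. s k * Wf L (p k) = c" using N A unfolding NE_def by auto
  define b where "b = (\<lambda>k. Wf L (p k) / Dd L (p k))"
  have bpos: "b k > 0" if "k < K" for k
  proof -
    have "p k < 1" using p01 that by simp
    then have "0 < Wf L (p k)" "0 < Dd L (p k)" using Wf_pos[OF L1, of "p k"] Dd_pos[OF L, of "p k"] by auto
    then show ?thesis unfolding b_def by simp
  qed
  have F: "((1 - p i)^(L-1) - c) * (\<Sum>j\<in>{..<K}-{i}. b j) = c * p i" if "i < K" for i
    using FOC[OF K L H SP p_def[symmetric] pS c0 sc p01 that] A[OF that] unfolding b_def by simp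
  define B where "B = (\<Sum>k<K. b k)"
  have SB: "(\<Sum>j\<in>{..<K}-{i}. b j) = B - b i" if "i < K" for i
    using sum_split_i[OF that, of b] unfolding B_def by simp
  have pb_mono: "p k * b k \<le> p i * b i" if "i < K" "k < K" "p k < p i" for i k
  proof -
    have G: "p j * b j = (1 - (1 - p j)^L) / (real L * Dd L (p j))" if "j < K" for j
    proof -
      have g: "1 - (1 - p j)^L = real L * (p j * Wf L (p j))" using G_eq[of L "p j"] by simp
      have "real L \<noteq> 0" using L by simp
      then show ?thesis unfolding b_def g by simp
    qed
    have "(1 - p i)^L \<le> (1 - p k)^L" using that p01 by (intro power_mono) auto
    then have g: "1 - (1 - p k)^L \<le> 1 - (1 - p i)^L" by simp
    have pk: "0 < p k" "p k < 1" using p01 that by auto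
    have pi: "0 < p i" "p i < 1" using p01 that by auto
    from pk have "(1 - p k)^L \<le> 1" by (intro power_le_one) auto
    then have g0: "0 \<le> 1 - (1 - p k)^L" by simp
    have dd: "Dd L (p i) \<le> Dd L (p k)" using Dd_anti[of "p k" "p i" L] pk pi that by auto
    have d0: "0 < Dd L (p i)" using Dd_pos[OF L] pi by auto
    have "(1 - (1 - p k)^L) / (real L * Dd L (p k)) \<le> (1 - (1 - p i)^L) / (real L * Dd L (p i))"
      using g g0 dd d0 L by (intro frac_le) auto
    then show ?thesis unfolding G[OF that(1)] G[OF that(2)] .
  qed
  have le_all: "p i \<le> p k" if ik: "i < K" "k < K" for i k
  proof (rule ccontr)
    assume "\<not> p i \<le> p k"
    then have lt: "p k < p i" by simp
    then have ne: "i \<noteq> k" by auto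
    have Si: "B - b i > 0" and Sk: "B - b k > 0"
    proof -
      have "b k \<le> (\<Sum>j\<in>{..<K}-{i}. b j)"
        by (rule member_le_sum) (use ik ne bpos in \<open>auto intro: less_imp_le\<close>)
      then show "B - b i > 0" using SB[OF ik(1)] bpos[OF ik(2)] by simp
      have "b i \<le> (\<Sum>j\<in>{..<K}-{k}. b j)"
        by (rule member_le_sum) (use ik ne bpos in \<open>auto intro: less_imp_le\<close>)
      then show "B - b k > 0" using SB[OF ik(2)] bpos[OF ik(1)] by simp
    qed
    have Bge: "B \<ge> b i + b k"
    proof -
      have "b k \<le> (\<Sum>j\<in>{..<K}-{i}. b j)"
        by (rule member_le_sum) (use ik ne bpos in \<open>auto intro: less_imp_le\<close>)
      then show ?thesis using SB[OF ik(1)] by simp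
    qed
    have Fi: "((1 - p i)^(L-1) - c) * (B - b i) = c * p i" using F[OF ik(1)] SB[OF ik(1)] by simp
    have Fk: "((1 - p k)^(L-1) - c) * (B - b k) = c * p k" using F[OF ik(2)] SB[OF ik(2)] by simp
    have pw: "(1 - p i)^(L-1) < (1 - p k)^(L-1)"
      using lt p01 ik L by (intro power_strict_mono) auto
    have Ai: "(1 - p i)^(L-1) - c = c * p i / (B - b i)" using Fi Si by (simp add: field_simps)
    have Ak: "(1 - p k)^(L-1) - c = c * p k / (B - b k)" using Fk Sk by (simp add: field_simps)
    have "c * p i / (B - b i) < c * p k / (B - b k)" using pw Ai Ak by simp
    then have "c * p i * (B - b k) < c * p k * (B - b i)" using Si Sk by (simp add: field_simps)
    then have ineq: "p i * (B - b k) < p k * (B - b i)" using c0 by (simp add: mult.assoc)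
    have "0 \<le> (p i - p k) * (B - b i - b k)" using lt Bge by simp
    then have e1: "0 \<le> p i * B - p i * b i - p i * b k - p k * B + p k * b i + p k * b k"
      by (simp add: algebra_simps)
    have e2: "p i * B - p i * b k < p k * B - p k * b i" using ineq by (simp add: algebra_simps)
    have "p i * b i < p k * b k" using e1 e2 by linarith
    then show False using pb_mono[OF ik lt] by simp
  qed
  define a where "a = 1 / real K"
  have pa: "p k = a" if k: "k < K" for k
  proof -
    have eq: "p j = p k" if "j < K" for j using le_all[OF that k] le_all[OF k that] by simp
    have "(\<Sum>j<K. p j) = (\<Sum>j<K. p k)" using eq by (intro sum.cong) auto
    then have "real K * p k = 1" using sumK by simp
    then show ?thesis unfolding a_def using K by (simp add: field_simps)
  qed
  have a01: "0 < a" "a < 1" unfolding a_def using K by auto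
  have Wa: "Wf L a > 0" using Wf_pos[OF L1] a01 by simp
  have Da: "Dd L a > 0" using Dd_pos[OF L] a01 by simp
  define Q where "Q = Wf L a + a * Dd L a / (real K - 1)"
  have Qp: "Q > 0" unfolding Q_def using Wa Da a01 K by (simp add: add_pos_nonneg)
  have key: "sstar K L * Q = (1 - a)^(L-1)" unfolding Q_def a_def using key_identity[OF K L] by simp
  have si: "s i = sstar K L" if i: "i < K" for i
  proof -
    have Sv: "(\<Sum>j\<in>{..<K}-{i}. b j) = (real K - 1) * (Wf L a / Dd L a)"
    proof -
      have "(\<Sum>j\<in>{..<K}-{i}. b j) = (\<Sum>j\<in>{..<K}-{i}. Wf L a / Dd L a)"
        unfolding b_def using pa by (intro sum.cong) auto
      also have "\<dots> = (real K - 1) * (Wf L a / Dd L a)" using i K by (simp add: of_nat_diff)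
      finally show ?thesis .
    qed
    have Fi: "((1 - a)^(L-1) - c) * ((real K - 1) * (Wf L a / Dd L a)) = c * a"
      using F[OF i] unfolding Sv pa[OF i] .
    then have "((1 - a)^(L-1) - c) * ((real K - 1) * Wf L a) = c * a * Dd L a"
      using Da by (simp add: field_simps)
    then have "(1 - a)^(L-1) * ((real K - 1) * Wf L a) = c * ((real K - 1) * Wf L a + a * Dd L a)"
      by (simp add: algebra_simps)
    also have "(real K - 1) * Wf L a + a * Dd L a = (real K - 1) * Q"
      unfolding Q_def using K by (simp add: field_simps)
    finally have "(1 - a)^(L-1) * ((real K - 1) * Wf L a) = c * ((real K - 1) * Q)" .
    then have "(sstar K L * Q) * Wf L a = c * Q" unfolding key using K by simp
    then have cW: "c = sstar K L * Wf L a" using Qp by (simp add: algebra_simps)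
    have "s i * Wf L (p i) = c" using sc i by blast
    then have "s i * Wf L a = c" unfolding pa[OF i] .
    then show ?thesis using cW Wa by simp
  qed
  show ?thesis
  proof (rule ext)
    fix i
    show "s i = (if i < K then sstar K L else 0)"
      using si so by (auto simp: offers_def)
  qed
qed


theorem mainTheorem4:
  fixes K L :: nat
  assumes "K \<ge> 2" and "L \<ge> 2"
    and "\<forall>s \<in> offers K. s \<noteq> (\<lambda>_. 0) \<longrightarrow> (\<exists>!p. ESS K L s p)"
  shows "SPNE K L (\<lambda>i. if i < K then sstar K L else 0)
    \<and> (\<forall>s. SPNE K L s \<and> s \<noteq> (\<lambda>_. 0) \<longrightarrow> s = (\<lambda>i. if i < K then sstar K L else 0))
    \<and> resp_strategy K L (\<lambda>i. if i < K then sstar K L else 0) = (\<lambda>i. if i < K then 1 / real K else 0)"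
  using part1[OF assms] part2[OF assms] by blast

end
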